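(* Let $\mathcal{P}\subseteq[0,1]^n$ be a polytope with vertex set $V$. For each $v\in V$ let $P_v$ be a non-zero Bernstein polynomial in $n$ variables, and suppose that $$\sum_{v\in V}P_v(x)(v-x)=0\quad\text{for all }x\in\mathcal{P}.$$ Then the Bernoulli race over the Bernstein polynomials $\{P_v\}_{v\in V}$ is a Bernoulli factory for $\mathcal{P}$. If moreover $\sum_{v\in V}P_v(x)>0$ for all $x\in\mathcal{P}$, then it is a strong Bernoulli factory for $\mathcal{P}$.
   Context: A Bernstein monomial is $\prod_{i=1}^n x_i^{a_i}(1-x_i)^{b_i}$ with nonnegative integers $a_i,b_i$; a Bernstein polynomial is a finite combination $\sum_j c_jM_j(x)$ of Bernstein monomials with positive coefficients $c_j$. A Bernoulli factory with output set $V$ (for inputs $x\in[0,1]^n$) is a (possibly infinite) rooted binary tree whose internal nodes are labeled by an index $i\in[n]$ or a known constant $c\in(0,1)$ and whose leaves are labeled by elements of $V$; on input $x$ one walks from the root, at a node labeled $i$ flipping a fresh independent coin that is $1$ with probability $x_i$ (an $x_i$-coin), at a node labeled $c$ a fresh coin of bias $c$, following the edge labeled by the outcome, and outputs the label of the leaf reached; $\mathcal{F}(x)$ is the output ($\emptyset$ if no leaf is reached). Vertices are viewed as vectors in $\mathbb{R}^n$. A Bernoulli factory for $\mathcal{P}$ is such a factory with output set $V$ that terminates almost surely (i.e. $\Pr[\mathcal{F}(x)=\emptyset]=0$) and satisfies $\mathbb{E}[\mathcal{F}(x)]=x$ for all $x\in\mathcal{P}\cap(0,1)^n$; it is a strong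 Bernoulli factory for $\mathcal{P}$ if it terminates almost surely and satisfies $\mathbb{E}[\mathcal{F}(x)]=x$ for all $x\in\mathcal{P}$. The Bernoulli race over Bernstein polynomials $\{P_v\}_{v\in V}$ is the following factory: fix a constant $C\ge1$ at least the sum of the coefficients of every $P_v$. In each round, pick $v\in V$ uniformly at random; writing $P_v=\sum_j c_jM_j$, select monomial $M_j$ with probability $c_j/C$ (with the remaining probability select none, which counts as failure); if $M_j=\prod_i x_i^{a_i}(1-x_i)^{b_i}$ is selected, flip the $x_i$-coin $a_i+b_i$ times for each $i$, and declare success iff for every $i$ the first $a_i$ flips are $1$ and the next $b_i$ flips are $0$. On success output $v$; otherwise start a new round. *)

theory Defs
  imports "HOL-Analysis.Analysis" "HOL-Probability.Probability"
begin

text \<open>Bernstein monomials over the variables indexed by the finite type 'n: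
  a pair (a, b) of exponent vectors, representing prod_i x_i^(a i) (1 - x_i)^(b i).\<close>
type_synonym 'n bmono = "('n \<Rightarrow> nat) \<times> ('n \<Rightarrow> nat)"

type_synonym 'n bpoly = "(real \<times> 'n bmono) list"

definition bernstein_poly :: "'n bpoly \<Rightarrow> bool" where
  "bernstein_poly p \<longleftrightarrow> (\<forall>(c, m) \<in> set p. c > 0)"

definition mono_eval :: "'n::finite bmono \<Rightarrow> real^'n \<Rightarrow> real" where
  "mono_eval m x = (\<Prod>i\<in>UNIV. (x$i) ^ (fst m i) * (1 - x$i) ^ (snd m i))"

definition bpoly_eval :: "'n::finite bpoly \<Rightarrow> real^'n \<Rightarrow> real" where
  "bpoly_eval p x = (\<Sum>(c, m) \<leftarrow> p. c * mono_eval m x)"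

definition coef_sum :: "'n bpoly \<Rightarrow> real" where
  "coef_sum p = (\<Sum>(c, m) \<leftarrow> p. c)"

fun flips :: "real \<Rightarrow> nat \<Rightarrow> bool list pmf" where
  "flips q 0 = return_pmf []"
| "flips q (Suc k) = bind_pmf (bernoulli_pmf q) (\<lambda>b. map_pmf (\<lambda>bs. b # bs) (flips q k))"

definition mono_trial :: "'n::finite bmono \<Rightarrow> real^'n \<Rightarrow> bool pmf" where
  "mono_trial m x =
     map_pmf (\<lambda>f. \<forall>i. take (fst m i) (f i) = replicate (fst m i) True
                    \<and> drop (fst m i) (f i) = replicate (snd m i) False)
       (Pi_pmf UNIV [] (\<lambda>i. flips (x$i) (fst m i + snd m i)))"

definition select_mono :: "'n bpoly \<Rightarrow> real \<Rightarrow> nat option pmf" where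
  "select_mono p C = embed_pmf (\<lambda>r. case r of
       None \<Rightarrow> 1 - coef_sum p / C
     | Some j \<Rightarrow> (if j < length p then fst (p ! j) / C else 0))"

definition race_round ::
  "(real^'n) set \<Rightarrow> (real^'n \<Rightarrow> 'n::finite bpoly) \<Rightarrow> real \<Rightarrow> real^'n \<Rightarrow> (real^'n) option pmf" where
  "race_round V P C x = bind_pmf (pmf_of_set V) (\<lambda>v.
     bind_pmf (select_mono (P v) C) (\<lambda>j. case j of
        None \<Rightarrow> return_pmf None
      | Some k \<Rightarrow> map_pmf (\<lambda>s. if s then Some v else None) (mono_trial (snd (P v ! k)) x)))"

text \<open>Output of the first successful round (None = never terminates).\<close>
definition first_success :: "'a option stream \<Rightarrow> 'a option" where
  "first_success \<omega> = (if \<exists>i. \<omega> !! i \<noteq> None then \<omega> !! (LEAST i. \<omega> !! i \<noteq> None) else None)"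

definition bernoulli_race ::
  "(real^'n) set \<Rightarrow> (real^'n \<Rightarrow> 'n::finite bpoly) \<Rightarrow> real \<Rightarrow> real^'n \<Rightarrow> (real^'n) option measure" where
  "bernoulli_race V P C x =
     distr (stream_space (measure_pmf (race_round V P C x))) (count_space UNIV) first_success"

definition factory_at :: "(real^'n) set \<Rightarrow> (real^'n) option measure \<Rightarrow> real^'n \<Rightarrow> bool" where
  "factory_at V M x \<longleftrightarrow> measure M {None} = 0 \<and> (\<Sum>v\<in>V. measure M {Some v} *\<^sub>R v) = x"

definition open_cube :: "(real^'n) set" where
  "open_cube = {x. \<forall>i. 0 < x$i \<and> x$i < 1}"

definition unit_cube :: "(real^'n) set" where
  "unit_cube = {x. \<forall>i. 0 \<le> x$i \<and> x$i \<le> 1}"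

definition bernoulli_factory ::
  "(real^'n) set \<Rightarrow> (real^'n) set \<Rightarrow> (real^'n \<Rightarrow> (real^'n) option measure) \<Rightarrow> bool" where
  "bernoulli_factory Q V F \<longleftrightarrow> (\<forall>x \<in> Q \<inter> open_cube. factory_at V (F x) x)"

definition strong_bernoulli_factory ::
  "(real^'n) set \<Rightarrow> (real^'n) set \<Rightarrow> (real^'n \<Rightarrow> (real^'n) option measure) \<Rightarrow> bool" where
  "strong_bernoulli_factory Q V F \<longleftrightarrow> (\<forall>x \<in> Q. factory_at V (F x) x)"

end

theory Submission
  imports Defs
begin


lemma set_flips: "l \<in> set_pmf (flips q k) \<Longrightarrow> length l = k"
  by (induction k arbitrary: l) auto

lemma pmf_flips_Cons:
  assumes "0 \<le> q" "q \<le> 1"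
  shows "pmf (flips q (Suc k)) (c # l) = (if c then q else 1 - q) * pmf (flips q k) l"
proof -
  have "pmf (flips q (Suc k)) (c # l) = (\<integral>b. pmf (map_pmf ((#) b) (flips q k)) (c # l) \<partial>measure_pmf (bernoulli_pmf q))"
    by (simp add: pmf_bind)
  also have "\<dots> = (if c then q else 1 - q) * pmf (flips q k) l"
  proof -
    have e: "pmf (map_pmf ((#) b) (flips q k)) (c # l) = (if b = c then pmf (flips q k) l else 0)" for b
    proof (cases "b = c")
      case True
      then show ?thesis using pmf_map_inj'[of "(#) b" "flips q k" l] by (simp add: inj_def)
    next
      case False
      then have "c # l \<notin> set_pmf (map_pmf ((#) b) (flips q k))" by auto
      then have "pmf (map_pmf ((#) b) (flips q k)) (c # l) = 0" by (rule iffD2[OF pmf_eq_0_set_pmf])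
      then show ?thesis using False by simp
    qed
    show ?thesis using assms by (simp add: e)
  qed
  finally show ?thesis .
qed

lemma pmf_flips_rep:
  assumes "0 \<le> q" "q \<le> 1"
  shows "pmf (flips q (a + b)) (replicate a True @ replicate b False) = q ^ a * (1 - q) ^ b"
proof (induction a)
  case 0
  show ?case
  proof (induction b)
    case 0 then show ?case by simp
  next
    case (Suc b) then show ?case using pmf_flips_Cons[OF assms, of b False "replicate b False"] by simp
  qed
next
  case (Suc a)
  then show ?case using pmf_flips_Cons[OF assms, of "a + b" True] by simp
qed

lemma prob_flips_event:
  assumes "0 \<le> q" "q \<le> 1"
  shows "measure_pmf.prob (flips q (a + b)) {l. take a l = replicate a True \<and> drop a l = replicate b False}
     = q ^ a * (1 - q) ^ b"
proof -
  let ?E = "{l. take a l = replicate a True \<and> drop a l = replicate b False}"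
  let ?r = "replicate a True @ replicate b False"
  let ?F = "flips q (a + b)"
  have H: "?E \<inter> set_pmf ?F = {?r} \<inter> set_pmf ?F"
  proof (intro equalityI subsetI)
    fix l assume "l \<in> ?E \<inter> set_pmf ?F"
    then have "take a l = replicate a True" "drop a l = replicate b False" "l \<in> set_pmf ?F" by auto
    then have "l = ?r" using append_take_drop_id[of a l] by simp
    with \<open>l \<in> set_pmf ?F\<close> show "l \<in> {?r} \<inter> set_pmf ?F" by simp
  next
    fix l assume "l \<in> {?r} \<inter> set_pmf ?F" then show "l \<in> ?E \<inter> set_pmf ?F" by auto
  qed
  have "measure_pmf.prob ?F ?E = measure_pmf.prob ?F (?E \<inter> set_pmf ?F)"
    by (rule measure_Int_set_pmf[symmetric])
  also have "\<dots> = measure_pmf.prob ?F ({?r} \<inter> set_pmf ?F)" by (simp only: H)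
  also have "\<dots> = measure_pmf.prob ?F {?r}" by (rule measure_Int_set_pmf)
  finally have "measure_pmf.prob ?F ?E = measure_pmf.prob ?F {?r}" .
  then show ?thesis using pmf_flips_rep[OF assms] by (simp add: measure_pmf_single)
qed

lemma pmf_mono_trial:
  assumes "x \<in> unit_cube"
  shows "pmf (mono_trial m x) True = mono_eval m x"
proof -
  let ?E = "\<lambda>i. {l. take (fst m i) l = replicate (fst m i) True \<and> drop (fst m i) l = replicate (snd m i) False}"
  have pre: "(\<lambda>f. \<forall>i. take (fst m i) (f i) = replicate (fst m i) True
                    \<and> drop (fst m i) (f i) = replicate (snd m i) False) -` {True} = PiE_dflt UNIV [] ?E"
    by (auto simp: PiE_dflt_def)
  have "pmf (mono_trial m x) True = measure_pmf.prob (Pi_pmf UNIV [] (\<lambda>i. flips (x$i) (fst m i + snd m i))) (PiE_dflt UNIV [] ?E)"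
    unfolding mono_trial_def pmf_map pre ..
  also have "\<dots> = (\<Prod>i\<in>UNIV. measure_pmf.prob (flips (x$i) (fst m i + snd m i)) (?E i))"
    by (rule measure_Pi_pmf_PiE_dflt) simp
  also have "\<dots> = mono_eval m x"
    unfolding mono_eval_def
    by (rule prod.cong[OF refl], rule prob_flips_event) (use assms in \<open>auto simp: unit_cube_def\<close>)
  finally show ?thesis .
qed




lemma coef_sum_nth: "coef_sum p = (\<Sum>j<length p. fst (p ! j))"
proof -
  have "coef_sum p = sum_list (map fst p)"
    unfolding coef_sum_def by (induction p) auto
  also have "\<dots> = (\<Sum>j<length p. fst (p ! j))"
    by (simp add: sum_list_sum_nth atLeast0LessThan)
  finally show ?thesis .
qed

lemma bpoly_eval_nth: "bpoly_eval p x = (\<Sum>j<length p. fst (p ! j) * mono_eval (snd (p ! j)) x)"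
proof -
  have "bpoly_eval p x = sum_list (map (\<lambda>cm. fst cm * mono_eval (snd cm) x) p)"
    unfolding bpoly_eval_def by (induction p) auto
  also have "\<dots> = (\<Sum>j<length p. fst (p ! j) * mono_eval (snd (p ! j)) x)"
    by (simp add: sum_list_sum_nth atLeast0LessThan)
  finally show ?thesis .
qed

lemma pmf_select_mono:
  assumes "bernstein_poly p" "coef_sum p \<le> C" "C \<ge> 1"
  shows "pmf (select_mono p C) r = (case r of
       None \<Rightarrow> 1 - coef_sum p / C
     | Some j \<Rightarrow> (if j < length p then fst (p ! j) / C else 0))"
  unfolding select_mono_def
proof (rule pmf_embed_pmf)
  let ?f = "\<lambda>r. case r of None \<Rightarrow> 1 - coef_sum p / C
     | Some j \<Rightarrow> (if j < length p then fst (p ! j) / C else 0)"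
  have pos: "\<And>j. j < length p \<Longrightarrow> fst (p ! j) > 0"
  proof -
    fix j assume "j < length p"
    then have "p ! j \<in> set p" by simp
    moreover have "\<forall>y\<in>set p. fst y > 0" using assms(1) unfolding bernstein_poly_def
      by (simp add: case_prod_beta)
    ultimately show "fst (p ! j) > 0" by blast
  qed
  show nn: "0 \<le> ?f r" for r
    using assms pos by (auto split: option.splits simp: less_imp_le)
  have h1: "(\<integral>\<^sup>+r. ennreal (?f r) \<partial>count_space UNIV) = (\<Sum>r\<in>insert None (Some ` {..<length p}). ennreal (?f r))"
    by (rule nn_integral_count_space') (auto split: option.splits)
  have h2: "(\<Sum>r\<in>insert None (Some ` {..<length p}). ennreal (?f r)) = ennreal (\<Sum>r\<in>insert None (Some ` {..<length p}). ?f r)"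
    using nn by (intro sum_ennreal) auto
  have h3: "(\<Sum>r\<in>insert None (Some ` {..<length p}). ?f r) = 1 - coef_sum p / C + (\<Sum>j<length p. fst (p ! j) / C)"
    by (subst sum.insert) (auto simp: sum.reindex)
  have h4: "1 - coef_sum p / C + (\<Sum>j<length p. fst (p ! j) / C) = 1"
    using assms(3) by (simp add: coef_sum_nth sum_divide_distrib)
  show "(\<integral>\<^sup>+r. ennreal (?f r) \<partial>count_space UNIV) = 1" unfolding h1 h2 h3 h4 by simp
qed




lemma set_case_round:
  "set_pmf (case j of None \<Rightarrow> return_pmf None
      | Some k \<Rightarrow> map_pmf (\<lambda>s. if s then Some w else None) (M k)) \<subseteq> {None, Some w}"
  by (cases j) auto

lemma set_race_round:
  assumes "finite V" "V \<noteq> {}"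
  shows "set_pmf (race_round V P C x) \<subseteq> insert None (Some ` V)"
proof
  fix y assume "y \<in> set_pmf (race_round V P C x)"
  then obtain w j where "w \<in> V" "y \<in> set_pmf (case j of None \<Rightarrow> return_pmf None
      | Some k \<Rightarrow> map_pmf (\<lambda>s. if s then Some w else None) (mono_trial (snd (P w ! k)) x))"
    unfolding race_round_def using assms by (auto simp: set_bind_pmf)
  then show "y \<in> insert None (Some ` V)" using set_case_round by fastforce
qed

lemma pmf_race_round:
  assumes "finite V" "V \<noteq> {}" "v \<in> V" "x \<in> unit_cube"
    and "bernstein_poly (P v)" "coef_sum (P v) \<le> C" "C \<ge> 1"
  shows "pmf (race_round V P C x) (Some v) = bpoly_eval (P v) x / (real (card V) * C)"
proof -
  define f where "f w = bind_pmf (select_mono (P w) C) (\<lambda>j. case j of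
        None \<Rightarrow> return_pmf None
      | Some k \<Rightarrow> map_pmf (\<lambda>s. if s then Some w else None) (mono_trial (snd (P w ! k)) x))" for w
  have rr: "race_round V P C x = bind_pmf (pmf_of_set V) f"
    unfolding race_round_def f_def ..
  have z: "pmf (f w) (Some v) = 0" if "w \<noteq> v" for w
  proof -
    have "Some v \<notin> set_pmf (f w)" using that set_case_round unfolding f_def
      by (fastforce simp: set_bind_pmf)
    then show ?thesis by (rule iffD2[OF pmf_eq_0_set_pmf])
  qed
  have e1: "pmf (race_round V P C x) (Some v) = (\<Sum>w\<in>V. pmf (f w) (Some v)) / real (card V)"
    unfolding rr using assms(2,1) by (rule pmf_bind_pmf_of_set)
  have e2: "(\<Sum>w\<in>V. pmf (f w) (Some v)) = pmf (f v) (Some v)"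
  proof -
    have "(\<Sum>w\<in>V. pmf (f w) (Some v)) = (\<Sum>w\<in>V. if w = v then pmf (f v) (Some v) else 0)"
      by (rule sum.cong) (auto simp: z)
    then show ?thesis using assms(1,3) by simp
  qed
  define g where "g j = (case j of
        None \<Rightarrow> return_pmf None
      | Some k \<Rightarrow> map_pmf (\<lambda>s. if s then Some v else None) (mono_trial (snd (P v ! k)) x))" for j
  have fv: "f v = bind_pmf (select_mono (P v) C) g" unfolding f_def g_def ..
  have gN: "pmf (g None) (Some v) = 0" by (simp add: g_def)
  have gS: "pmf (g (Some k)) (Some v) = mono_eval (snd (P v ! k)) x" for k
  proof -
    let ?h = "\<lambda>s::bool. if s then Some v else None"
    have "inj ?h" by (auto simp: inj_def split: if_splits)
    then have "pmf (map_pmf ?h (mono_trial (snd (P v ! k)) x)) (?h True) = pmf (mono_trial (snd (P v ! k)) x) True"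
      by (rule pmf_map_inj')
    then show ?thesis using pmf_mono_trial[OF assms(4)] by (simp add: g_def)
  qed
  have ps: "pmf (select_mono (P v) C) r = (case r of
     None \<Rightarrow> 1 - coef_sum (P v) / C
   | Some j \<Rightarrow> (if j < length (P v) then fst (P v ! j) / C else 0))" for r
    by (rule pmf_select_mono[OF assms(5,6,7)])
  have e3: "pmf (f v) (Some v) = (\<integral>j. pmf (g j) (Some v) \<partial>measure_pmf (select_mono (P v) C))"
    unfolding fv by (rule pmf_bind)
  have e4: "(\<integral>j. pmf (g j) (Some v) \<partial>measure_pmf (select_mono (P v) C))
     = (\<Sum>j\<in>insert None (Some ` {..<length (P v)}). pmf (g j) (Some v) * pmf (select_mono (P v) C) j)"
  proof (rule integral_measure_pmf_real)
    fix a assume a: "a \<in> set_pmf (select_mono (P v) C)" "pmf (g a) (Some v) \<noteq> 0"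
    show "a \<in> insert None (Some ` {..<length (P v)})"
    proof (cases a)
      case (Some j)
      have "pmf (select_mono (P v) C) a \<noteq> 0" using a(1) by (simp add: set_pmf_iff)
      then have "j < length (P v)" using Some ps[of a] by (auto split: if_splits)
      then show ?thesis using Some by auto
    qed simp
  qed simp
  have e5: "(\<Sum>j\<in>insert None (Some ` {..<length (P v)}). pmf (g j) (Some v) * pmf (select_mono (P v) C) j)
      = (\<Sum>k<length (P v). mono_eval (snd (P v ! k)) x * (fst (P v ! k) / C))"
    by (subst sum.insert) (auto simp: sum.reindex gN gS ps)
  have e6: "(\<Sum>k<length (P v). mono_eval (snd (P v ! k)) x * (fst (P v ! k) / C)) = bpoly_eval (P v) x / C"
    by (simp add: bpoly_eval_nth sum_divide_distrib mult.commute)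
  show ?thesis unfolding e1 e2 e3 e4 e5 e6 by simp
qed




lemma first_success_Stream:
  "first_success (t ## \<omega>) = (case t of None \<Rightarrow> first_success \<omega> | Some a \<Rightarrow> Some a)"
proof (cases t)
  case None
  have ex: "(\<exists>i. (t ## \<omega>) !! i \<noteq> None) \<longleftrightarrow> (\<exists>i. \<omega> !! i \<noteq> None)"
  proof
    assume "\<exists>i. (t ## \<omega>) !! i \<noteq> None"
    then obtain i where "(t ## \<omega>) !! i \<noteq> None" by blast
    with None show "\<exists>i. \<omega> !! i \<noteq> None" by (cases i) auto
  next
    assume "\<exists>i. \<omega> !! i \<noteq> None"
    then obtain i where "\<omega> !! i \<noteq> None" by blast
    then have "(t ## \<omega>) !! Suc i \<noteq> None" by simp
    then show "\<exists>i. (t ## \<omega>) !! i \<noteq> None" by blast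
  qed
  show ?thesis
  proof (cases "\<exists>i. \<omega> !! i \<noteq> None")
    case True
    then obtain i where i: "\<omega> !! i \<noteq> None" by blast
    have "(LEAST i. (t ## \<omega>) !! i \<noteq> None) = Suc (LEAST i. (t ## \<omega>) !! Suc i \<noteq> None)"
      by (rule Least_Suc[of _ "Suc i"]) (use i None in auto)
    then show ?thesis using True ex None unfolding first_success_def by simp
  next
    case False
    then show ?thesis using ex None unfolding first_success_def by simp
  qed
next
  case (Some a)
  then have "(t ## \<omega>) !! 0 \<noteq> None" by simp
  then have "\<exists>i. (t ## \<omega>) !! i \<noteq> None" by blast
  moreover have "(LEAST i. (t ## \<omega>) !! i \<noteq> None) = 0" using \<open>(t ## \<omega>) !! 0 \<noteq> None\<close> by (rule Least_eq_0)
  ultimately show ?thesis using Some unfolding first_success_def by simp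
qed

lemma snth_meas_count:
  "(\<lambda>\<omega>. \<omega> !! i) \<in> measurable (stream_space (measure_pmf p)) (count_space UNIV)"
proof -
  have "measurable (stream_space (measure_pmf p)) (measure_pmf p) = measurable (stream_space (measure_pmf p)) (count_space UNIV)"
    by (rule measurable_cong_sets) auto
  then show ?thesis using measurable_snth[of i "measure_pmf p"] by simp
qed

lemma first_success_meas:
  "first_success \<in> measurable (stream_space (measure_pmf p)) (count_space UNIV)"
proof -
  note snth_meas_count[measurable]
  have l: "(\<lambda>\<omega>. LEAST i. \<omega> !! i \<noteq> None) \<in> measurable (stream_space (measure_pmf p)) (count_space UNIV)"
    by measurable
  have c: "(\<lambda>\<omega>. \<omega> !! (LEAST i. \<omega> !! i \<noteq> None)) \<in> measurable (stream_space (measure_pmf p)) (count_space UNIV)"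
    by (rule measurable_compose_countable[OF snth_meas_count l])
  have s: "{\<omega> \<in> space (stream_space (measure_pmf p)). \<exists>i. \<omega> !! i \<noteq> None} \<in> sets (stream_space (measure_pmf p))"
    by measurable
  have "(\<lambda>\<omega>. if \<exists>i. \<omega> !! i \<noteq> None then \<omega> !! (LEAST i. \<omega> !! i \<noteq> None) else None)
     \<in> measurable (stream_space (measure_pmf p)) (count_space UNIV)"
    by (rule measurable_If[OF c _ s]) simp
  then show ?thesis unfolding first_success_def[abs_def] .
qed

lemma race_fix:
  fixes p :: "'a option pmf"
  defines "S \<equiv> stream_space (measure_pmf p)"
  shows "measure S {\<omega>\<in>space S. first_success \<omega> \<in> A}
      = measure_pmf.prob p (A - {None}) + measure S {\<omega>\<in>space S. first_success \<omega> \<in> A} * pmf p None"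
proof -
  interpret S: prob_space S unfolding S_def by (rule prob_space.prob_space_stream_space[OF prob_space_measure_pmf])
  define F where "F = measure S {\<omega>\<in>space S. first_success \<omega> \<in> A}"
  note first_success_meas[measurable]
  have ms: "{\<omega>\<in>space S. first_success \<omega> \<in> A} \<in> sets S"
  proof -
    have "{\<omega>\<in>space S. first_success \<omega> \<in> A} = first_success -` A \<inter> space S" by auto
    moreover have "first_success -` A \<inter> space S \<in> sets S"
      unfolding S_def by (rule measurable_sets[OF first_success_meas]) simp
    ultimately show ?thesis by simp
  qed
  have "ennreal F = (\<integral>\<^sup>+t. ennreal (measure S {\<omega>\<in>space S. first_success (t ## \<omega>) \<in> A}) \<partial>measure_pmf p)"
    unfolding F_def S_def by (rule prob_space.prob_stream_space[OF prob_space_measure_pmf]) (use ms in \<open>simp add: S_def\<close>)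
  also have "\<dots> = (\<integral>\<^sup>+t. ennreal (indicator (A - {None}) t) + ennreal F * indicator {None} t \<partial>measure_pmf p)"
  proof (rule nn_integral_cong)
    fix t :: "'a option"
    show "ennreal (measure S {\<omega>\<in>space S. first_success (t ## \<omega>) \<in> A})
       = ennreal (indicator (A - {None}) t) + ennreal F * indicator {None} t"
    proof (cases t)
      case None
      then show ?thesis by (simp add: first_success_Stream F_def)
    next
      case (Some a)
      then show ?thesis
        by (cases "Some a \<in> A") (simp_all add: first_success_Stream S.prob_space)
    qed
  qed
  also have "\<dots> = (\<integral>\<^sup>+t. ennreal (indicator (A - {None}) t) \<partial>measure_pmf p) + (\<integral>\<^sup>+t. ennreal F * indicator {None} t \<partial>measure_pmf p)"
    by (rule nn_integral_add) auto
  also have "\<dots> = emeasure (measure_pmf p) (A - {None}) + ennreal F * emeasure (measure_pmf p) {None}"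
    by (simp add: nn_integral_cmult_indicator ennreal_indicator)
  also have "\<dots> = ennreal (measure_pmf.prob p (A - {None}) + F * pmf p None)"
    by (simp add: measure_pmf.emeasure_eq_measure measure_pmf_single ennreal_mult ennreal_plus F_def)
  finally have "ennreal F = ennreal (measure_pmf.prob p (A - {None}) + F * pmf p None)" .
  then have "F = measure_pmf.prob p (A - {None}) + F * pmf p None"
    by (subst (asm) ennreal_inj) (auto simp: F_def)
  then show ?thesis unfolding F_def .
qed

lemma race_distr:
  fixes p :: "'a option pmf"
  assumes q: "pmf p None < 1"
  defines "M \<equiv> distr (stream_space (measure_pmf p)) (count_space UNIV) first_success"
  shows "measure M {None} = 0" "measure M {Some v} = pmf p (Some v) / (1 - pmf p None)"
proof -
  define S where "S = stream_space (measure_pmf p)"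
  have mA: "measure M A = measure S {\<omega>\<in>space S. first_success \<omega> \<in> A}" for A
  proof -
    have "measure M A = measure S (first_success -` A \<inter> space S)"
      unfolding M_def S_def by (rule measure_distr[OF first_success_meas]) simp
    also have "first_success -` A \<inter> space S = {\<omega>\<in>space S. first_success \<omega> \<in> A}" by auto
    finally show ?thesis .
  qed
  have key: "measure M A * (1 - pmf p None) = measure_pmf.prob p (A - {None})" for A
    using race_fix[of p A] unfolding mA S_def by (simp add: algebra_simps)
  show "measure M {None} = 0" using key[of "{None}"] q by simp
  have "measure M {Some v} * (1 - pmf p None) = pmf p (Some v)"
    using key[of "{Some v}"] by (simp add: measure_pmf_single)
  then show "measure M {Some v} = pmf p (Some v) / (1 - pmf p None)"
    using q by (simp add: field_simps)
qed




lemma mono_eval_pos: "x \<in> open_cube \<Longrightarrow> mono_eval m x > 0"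
  unfolding mono_eval_def open_cube_def by (intro prod_pos) auto

lemma bpoly_eval_pos:
  assumes "bernstein_poly p" "p \<noteq> []" "x \<in> open_cube"
  shows "bpoly_eval p x > 0"
proof -
  have pos: "fst (p ! j) > 0" if "j < length p" for j
  proof -
    from that have "p ! j \<in> set p" by simp
    moreover have "\<forall>y\<in>set p. fst y > 0" using assms(1) unfolding bernstein_poly_def
      by (simp add: case_prod_beta)
    ultimately show "fst (p ! j) > 0" by blast
  qed
  show ?thesis unfolding bpoly_eval_nth
    using assms(2) pos mono_eval_pos[OF assms(3)] by (intro sum_pos) auto
qed

lemma factory_key:
  fixes V :: "(real^'n::finite) set" and P :: "real^'n \<Rightarrow> 'n bpoly" and C :: real
  assumes fin: "finite V" and ne: "V \<noteq> {}" and xc: "x \<in> unit_cube"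
    and bp: "\<forall>v\<in>V. bernstein_poly (P v)"
    and bal: "(\<Sum>v\<in>V. bpoly_eval (P v) x *\<^sub>R (v - x)) = 0"
    and C1: "C \<ge> 1" and cs: "\<forall>v\<in>V. coef_sum (P v) \<le> C"
    and spos: "(\<Sum>v\<in>V. bpoly_eval (P v) x) > 0"
  shows "factory_at V (bernoulli_race V P C x) x"
proof -
  define p where "p = race_round V P C x"
  define e where "e v = bpoly_eval (P v) x" for v
  define s where "s = (\<Sum>v\<in>V. e v)"
  define D where "D = real (card V) * C"
  have Dpos: "D > 0" unfolding D_def using fin ne C1 by (simp add: card_gt_0_iff)
  have spos': "s > 0" using spos unfolding s_def e_def .
  have pv: "pmf p (Some v) = e v / D" if "v \<in> V" for v
    unfolding p_def e_def D_def
    using pmf_race_round[OF fin ne that xc] bp cs C1 that by simp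
  have tot: "(\<Sum>r\<in>insert None (Some ` V). pmf p r) = 1"
    unfolding p_def by (rule sum_pmf_eq_1) (use fin set_race_round[OF fin ne] in auto)
  have "(\<Sum>r\<in>insert None (Some ` V). pmf p r) = pmf p None + (\<Sum>v\<in>V. pmf p (Some v))"
    using fin by (subst sum.insert) (auto simp: sum.reindex)
  also have "(\<Sum>v\<in>V. pmf p (Some v)) = s / D"
    unfolding s_def by (simp add: pv sum_divide_distrib)
  finally have q: "1 - pmf p None = s / D" using tot by simp
  have qlt: "pmf p None < 1" using q spos' Dpos by (smt (verit) divide_pos_pos)
  define M where "M = bernoulli_race V P C x"
  have Mdef: "M = distr (stream_space (measure_pmf p)) (count_space UNIV) first_success"
    unfolding M_def p_def bernoulli_race_def ..
  have mN: "measure M {None} = 0" unfolding Mdef by (rule race_distr(1)[OF qlt])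
  have mS: "measure M {Some v} = e v / s" if "v \<in> V" for v
  proof -
    have "measure M {Some v} = pmf p (Some v) / (1 - pmf p None)"
      unfolding Mdef by (rule race_distr(2)[OF qlt])
    then show ?thesis using pv[OF that] q Dpos spos' by (simp add: field_simps)
  qed
  have bal': "(\<Sum>v\<in>V. e v *\<^sub>R v) = s *\<^sub>R x"
  proof -
    have "(\<Sum>v\<in>V. e v *\<^sub>R (v - x)) = (\<Sum>v\<in>V. e v *\<^sub>R v) - s *\<^sub>R x"
      unfolding s_def by (simp add: scaleR_diff_right sum_subtractf scaleR_sum_left)
    then show ?thesis using bal unfolding e_def by simp
  qed
  have "(\<Sum>v\<in>V. measure M {Some v} *\<^sub>R v) = (\<Sum>v\<in>V. (1 / s) *\<^sub>R (e v *\<^sub>R v))"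
    by (rule sum.cong) (auto simp: mS)
  also have "\<dots> = (1 / s) *\<^sub>R (\<Sum>v\<in>V. e v *\<^sub>R v)" by (simp add: scaleR_sum_right)
  also have "\<dots> = x" using bal' spos' by simp
  finally show ?thesis unfolding factory_at_def M_def[symmetric] using mN by simp
qed

theorem theorem2p8:
  fixes Q V :: "(real^'n::finite) set" and P :: "real^'n \<Rightarrow> 'n bpoly" and C :: real
  assumes "polytope Q" and "Q \<subseteq> unit_cube"
    and "V = {v. v extreme_point_of Q}"
    and "\<forall>v\<in>V. bernstein_poly (P v) \<and> P v \<noteq> []"
    and "\<forall>x\<in>Q. (\<Sum>v\<in>V. bpoly_eval (P v) x *\<^sub>R (v - x)) = 0"
    and "C \<ge> 1" and "\<forall>v\<in>V. coef_sum (P v) \<le> C"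
  shows "bernoulli_factory Q V (bernoulli_race V P C) \<and>
         ((\<forall>x\<in>Q. (\<Sum>v\<in>V. bpoly_eval (P v) x) > 0)
           \<longrightarrow> strong_bernoulli_factory Q V (bernoulli_race V P C))"
proof -
  have fin: "finite V" unfolding assms(3)
    by (rule finite_polyhedron_extreme_points[OF polytope_imp_polyhedron[OF assms(1)]])
  have hull: "Q = convex hull V" unfolding assms(3)
    by (rule Krein_Milman_Minkowski[OF polytope_imp_compact[OF assms(1)] polytope_imp_convex[OF assms(1)]])
  have ne: "V \<noteq> {}" if "x \<in> Q" for x
    using that hull by auto
  have key: "factory_at V (bernoulli_race V P C x) x" if "x \<in> Q" "(\<Sum>v\<in>V. bpoly_eval (P v) x) > 0" for x
    by (rule factory_key[OF fin ne[OF that(1)]]) (use assms that in auto)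
  have part1: "bernoulli_factory Q V (bernoulli_race V P C)"
    unfolding bernoulli_factory_def
  proof
    fix x assume x: "x \<in> Q \<inter> open_cube"
    have "(\<Sum>v\<in>V. bpoly_eval (P v) x) > 0"
      using fin ne[of x] x assms(4) bpoly_eval_pos by (intro sum_pos) auto
    then show "factory_at V (bernoulli_race V P C x) x" using key x by blast
  qed
  show ?thesis using part1 key unfolding strong_bernoulli_factory_def by blast
qed


end
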